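(* Let $n\ge 1$. Under optimal play, the Sign Game on the star graph $S_n$ results in a draw when $n$ is even, and is won by Player 2 when $n$ is odd.
   Context: The Sign Game on a finite simple undirected graph $G$: two players, Player P and Player N, alternate turns; the player who moves first is called Player 1 and the other Player 2 (either of P, N may be Player 1). On a turn, a player chooses a vertex of $G$ not yet assigned a value and assigns it $+1$ or $-1$. The game ends when every vertex has been assigned. The score of an edge $uv$ is the product of the values of $u$ and $v$, and the score $s(G)$ of the game is the sum of the scores of all edges. Player P wins if $s(G)>0$, Player N wins if $s(G)<0$, and the game is a draw if $s(G)=0$. "Under optimal play" means both players play optimally, each with primary goal of winning and secondary goal of at least drawing; the result is the outcome of this finite perfect-information game under such play. The star graph $S_n$ has $n+1$ vertices: one central vertex adjacent to each of $n$ leaves, with no other edges. *)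

theory Defs
  imports Main
begin

text \<open>A finite simple graph is given by a vertex set V and an edge set E of
2-element subsets of V. A (complete) assignment is f :: 'a \<Rightarrow> int with values +1/-1
on V.\<close>

definition score :: "'a set set \<Rightarrow> ('a \<Rightarrow> int) \<Rightarrow> int" where
  "score E f = (\<Sum>e\<in>E. \<Prod>v\<in>e. f v)"

text \<open>Game value (minimax) of a position: k = number of unassigned vertices,
pturn = True iff Player P is to move, f = current assignment, U = unassigned
vertices. The value is sgn of the final score: 1 = P wins, 0 = draw, -1 = N wins.
P maximises and N minimises this value, which is exactly "primary goal winning,
secondary goal at least drawing".\<close>

primrec sg_val :: "'a set set \<Rightarrow> nat \<Rightarrow> bool \<Rightarrow> ('a \<Rightarrow> int) \<Rightarrow> 'a set \<Rightarrow> int" where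
  "sg_val E 0 pturn f U = sgn (score E f)"
| "sg_val E (Suc k) pturn f U =
     (let opts = {sg_val E k (\<not> pturn) (f(v := s)) (U - {v}) | v s. v \<in> U \<and> s \<in> {1, -1}}
      in if pturn then Max opts else Min opts)"

definition sign_game_outcome :: "'a set \<Rightarrow> 'a set set \<Rightarrow> bool \<Rightarrow> int" where
  "sign_game_outcome V E P_first = sg_val E (card V) P_first (\<lambda>_. 0) V"

definition star_vertices :: "nat \<Rightarrow> nat set" where
  "star_vertices n = {0..n}"

definition star_edges :: "nat \<Rightarrow> nat set set" where
  "star_edges n = {{0, i} | i. i \<in> {1..n}}"

end

theory Submission
  imports Defs
begin

lemma score_star: "score (star_edges n) f = f 0 * (\<Sum>i\<in>{1..n}. f i)"
proof -
  have E: "star_edges n = (\<lambda>i. {0, i}) ` {1..n}" unfolding star_edges_def by auto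
  have inj: "inj_on (\<lambda>i::nat. {0, i}) {1..n}" by (auto simp: inj_on_def doubleton_eq_iff)
  have "score (star_edges n) f = (\<Sum>i\<in>{1..n}. \<Prod>v\<in>{0,i}. f v)"
    unfolding score_def E sum.reindex[OF inj] o_def by (rule refl)
  also have "\<dots> = (\<Sum>i\<in>{1..n}. f 0 * f i)" by (rule sum.cong) auto
  finally show ?thesis by (simp add: sum_distrib_left)
qed

lemma sg_val_Suc_eq: "sg_val E (Suc k) p f U =
  (if p then Max {sg_val E k (\<not> p) (f(v := s)) (U - {v}) | v s. v \<in> U \<and> s \<in> {1, -1}}
   else Min {sg_val E k (\<not> p) (f(v := s)) (U - {v}) | v s. v \<in> U \<and> s \<in> {1, -1}})"
  by (simp add: Let_def)

lemma opts2:
  assumes "\<And>v s. v \<in> U \<Longrightarrow> s \<in> {1, -1} \<Longrightarrow> g v s = q s" "U \<noteq> {}"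
  shows "{g v s | v s. v \<in> U \<and> s \<in> {1, -1::int}} = {q 1, q (-1)}"
  using assms by auto (metis empty_iff)+

lemma sum_upd:
  fixes n v :: nat and f :: "nat \<Rightarrow> int"
  assumes "v \<in> U" "U \<subseteq> {0..n}" "v \<noteq> 0"
  shows "(\<Sum>i\<in>{1..n} - (U - {v}). (f(v := s)) i) = s + (\<Sum>i\<in>{1..n} - U. f i)"
proof -
  have "v \<in> {0..n}" using assms by blast
  moreover have "1 \<le> v" using assms(3) by (cases v) auto
  ultimately have "v \<in> {1..n}" by simp
  then have "{1..n} - (U - {v}) = insert v ({1..n} - U)" using assms by auto
  moreover have "(\<Sum>i\<in>{1..n} - U. (f(v := s)) i) = (\<Sum>i\<in>{1..n} - U. f i)"
    by (rule sum.cong) (use assms in auto)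
  moreover have "v \<notin> {1..n} - U" using assms(1) by simp
  ultimately show ?thesis by (simp add: sum.insert)
qed

lemma centre_assigned:
  assumes "U \<subseteq> {1..n}" "card U = k" "f 0 = 1 \<or> f 0 = -1"
  shows "sg_val (star_edges n) k p f U =
    sgn (f 0 * (\<Sum>i\<in>{1..n} - U. f i) + (if p then 1 else -1) * int (k mod 2))"
  using assms
proof (induction k arbitrary: p f U)
  case 0
  then have "U = {}" using finite_subset[of U "{1..n}"] by auto
  then show ?case by (simp add: score_star)
next
  case (Suc k)
  have fin: "finite U" using Suc.prems(1) finite_subset by blast
  have ne: "U \<noteq> {}" using Suc.prems(2) by auto
  define S where "S = (\<Sum>i\<in>{1..n} - U. f i)"
  define q where "q s = sgn (f 0 * (s + S) + (if \<not> p then 1 else -1) * int (k mod 2))" for s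
  have H: "sg_val (star_edges n) k (\<not> p) (f(v := s)) (U - {v}) = q s"
    if "v \<in> U" "s \<in> {1, -1}" for v s
  proof -
    have v0: "v \<noteq> 0" using that Suc.prems(1) by auto
    have "sg_val (star_edges n) k (\<not> p) (f(v := s)) (U - {v}) =
      sgn ((f(v := s)) 0 * (\<Sum>i\<in>{1..n} - (U - {v}). (f(v := s)) i) + (if \<not> p then 1 else -1) * int (k mod 2))"
      apply (rule Suc.IH)
      using Suc.prems that v0 fin by auto
    also have "\<dots> = q s"
    proof -
      have U0: "U \<subseteq> {0..n}" using Suc.prems(1) by auto
      have eq: "(\<Sum>i\<in>{1..n} - (U - {v}). (f(v := s)) i) = s + S"
        unfolding S_def by (rule sum_upd[OF that(1) U0 v0])
      show ?thesis unfolding eq q_def using v0 by simp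
    qed
    finally show ?thesis .
  qed
  have O: "{sg_val (star_edges n) k (\<not> p) (f(v := s)) (U - {v}) | v s. v \<in> U \<and> s \<in> {1, -1}} = {q 1, q (-1)}"
    by (rule opts2[OF H ne])
  define t where "t = f 0 * S"
  define c where "c = (if \<not> p then 1 else -1) * int (k mod 2)"
  have Q: "{q 1, q (-1)} = {sgn (t + 1 + c), sgn (t - 1 + c)}"
  proof (cases "f 0 = 1")
    case True
    then show ?thesis unfolding q_def t_def c_def by (simp add: algebra_simps)
  next
    case False
    then have "f 0 = -1" using Suc.prems(3) by auto
    then have "q 1 = sgn (t - 1 + c)" "q (-1) = sgn (t + 1 + c)"
      unfolding q_def t_def c_def by (simp_all add: algebra_simps)
    then show ?thesis by auto
  qed
  have mx: "Max {sgn (t + 1 + c), sgn (t - 1 + c)} = sgn (t + 1 + c)"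
    by (auto simp: sgn_if)
  have mn: "Min {sgn (t + 1 + c), sgn (t - 1 + c)} = sgn (t - 1 + c)"
    by (auto simp: sgn_if)
  have par: "int (Suc k mod 2) = 1 - int (k mod 2)" by presburger
  show ?case unfolding sg_val_Suc_eq O Q S_def[symmetric] t_def[symmetric] mx mn
    unfolding c_def par by (cases p) (simp_all add: algebra_simps)
qed

lemma arith_max:
  fixes S r :: int assumes "r = 0 \<or> r = 1"
  shows "Max {sgn (S - (1 - r)), sgn (- S - (1 - r)), - sgn (\<bar>1 + S\<bar> - r), - sgn (\<bar>-1 + S\<bar> - r)}
         = sgn (\<bar>S\<bar> - (1 - r))"
  using assms proof (elim disjE)
  assume r: "r = 0" show ?thesis unfolding r
    by (cases "S < -1"; cases "S = -1"; cases "S = 0"; cases "S = 1"; simp add: sgn_if abs_if max_def)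
next
  assume r: "r = 1" show ?thesis unfolding r
    by (cases "S < -1"; cases "S = -1"; cases "S = 0"; cases "S = 1"; simp add: sgn_if abs_if max_def)
qed

lemma arith_min:
  fixes S r :: int assumes "r = 0 \<or> r = 1"
  shows "Min {sgn (S + (1 - r)), sgn (- S + (1 - r)), sgn (\<bar>1 + S\<bar> - r), sgn (\<bar>-1 + S\<bar> - r)}
         = - sgn (\<bar>S\<bar> - (1 - r))"
  using assms proof (elim disjE)
  assume r: "r = 0" show ?thesis unfolding r
    by (cases "S < -1"; cases "S = -1"; cases "S = 0"; cases "S = 1"; simp add: sgn_if abs_if min_def)
next
  assume r: "r = 1" show ?thesis unfolding r
    by (cases "S < -1"; cases "S = -1"; cases "S = 0"; cases "S = 1"; simp add: sgn_if abs_if min_def)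
qed



lemma centre_free:
  assumes "0 \<in> U" "U \<subseteq> {0..n}" "card U = Suc m"
  shows "sg_val (star_edges n) (Suc m) p f U =
    (if p then 1 else -1) * sgn (\<bar>\<Sum>i\<in>{1..n} - U. f i\<bar> - int (m mod 2))"
  using assms
proof (induction m arbitrary: p f U)
  case 0
  have fin: "finite U" using "0.prems"(2) finite_subset by blast
  then have U: "U = {0}" using "0.prems"(1,3) by (auto simp: card_Suc_eq)
  define S where "S = (\<Sum>i\<in>{1..n} - U. f i)"
  define A where "A c = sgn (c * S)" for c :: int
  have H: "sg_val (star_edges n) 0 (\<not> p) (f(v := c)) (U - {v}) = A c"
    if "v \<in> U" "c \<in> {1, -1}" for v c
    using that U by (simp add: score_star A_def S_def)
  have O: "{sg_val (star_edges n) 0 (\<not> p) (f(v := s)) (U - {v}) | v s. v \<in> U \<and> s \<in> {1, -1}} = {A 1, A (-1)}"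
    by (rule opts2[OF H]) (use U in auto)
  show ?case unfolding sg_val_Suc_eq O S_def[symmetric] unfolding A_def
    by (cases p) (auto simp: sgn_if abs_if)
next
  case (Suc m)
  have fin: "finite U" using Suc.prems(2) finite_subset by blast
  define S where "S = (\<Sum>i\<in>{1..n} - U. f i)"
  define A where "A c = sgn (c * S + (if \<not> p then 1 else -1) * int (Suc m mod 2))" for c :: int
  define B where "B s = (if \<not> p then 1 else -1) * sgn (\<bar>s + S\<bar> - int (m mod 2))" for s :: int
  define g where "g v s = sg_val (star_edges n) (Suc m) (\<not> p) (f(v := s)) (U - {v})" for v s
  have HA: "g 0 c = A c" if "c \<in> {1, -1}" for c
  proof -
    have "g 0 c = sgn ((f(0 := c)) 0 * (\<Sum>i\<in>{1..n} - (U - {0}). (f(0 := c)) i) + (if \<not> p then 1 else -1) * int (Suc m mod 2))"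
      unfolding g_def
      apply (rule centre_assigned)
      using Suc.prems that fin by auto
    also have "(\<Sum>i\<in>{1..n} - (U - {0}). (f(0 := c)) i) = S"
      unfolding S_def by (rule sum.cong) auto
    finally show ?thesis unfolding A_def by simp
  qed
  have HB: "g v s = B s" if "v \<in> U" "v \<noteq> 0" "s \<in> {1, -1}" for v s
  proof -
    have "g v s = (if \<not> p then 1 else -1) * sgn (\<bar>\<Sum>i\<in>{1..n} - (U - {v}). (f(v := s)) i\<bar> - int (m mod 2))"
      unfolding g_def
      apply (rule Suc.IH)
      using Suc.prems that fin by auto
    also have "(\<Sum>i\<in>{1..n} - (U - {v}). (f(v := s)) i) = s + S"
      unfolding S_def by (rule sum_upd[OF that(1) Suc.prems(2) that(2)])
    finally show ?thesis unfolding B_def by simp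
  qed
  obtain w where w: "w \<in> U" "w \<noteq> 0"
  proof -
    have "card (U - {0}) = Suc m" using Suc.prems fin by simp
    then have "U - {0} \<noteq> {}" by (metis card.empty nat.distinct(1))
    then show ?thesis using that by blast
  qed
  have O: "{g v s | v s. v \<in> U \<and> s \<in> {1, -1}} = {A 1, A (-1), B 1, B (-1)}"
  proof
    show "{g v s | v s. v \<in> U \<and> s \<in> {1, -1}} \<subseteq> {A 1, A (-1), B 1, B (-1)}"
    proof
      fix x assume "x \<in> {g v s | v s. v \<in> U \<and> s \<in> {1, -1}}"
      then obtain v s where "x = g v s" "v \<in> U" "s \<in> {1, -1}" by blast
      show "x \<in> {A 1, A (-1), B 1, B (-1)}"
      proof (cases "v = 0")
        case True
        then have "x = A s" using HA \<open>x = g v s\<close> \<open>s \<in> {1, -1}\<close> by simp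
        then show ?thesis using \<open>s \<in> {1, -1}\<close> by auto
      next
        case False
        then have "x = B s" using HB \<open>x = g v s\<close> \<open>s \<in> {1, -1}\<close> \<open>v \<in> U\<close> by simp
        then show ?thesis using \<open>s \<in> {1, -1}\<close> by auto
      qed
    qed
  next
    have "A 1 = g 0 1" "A (-1) = g 0 (-1)" "B 1 = g w 1" "B (-1) = g w (-1)"
      using HA HB w by auto
    then show "{A 1, A (-1), B 1, B (-1)} \<subseteq> {g v s | v s. v \<in> U \<and> s \<in> {1, -1}}"
      using Suc.prems(1) w by blast
  qed
  have r: "int (m mod 2) = 0 \<or> int (m mod 2) = 1" by presburger
  have par: "int (Suc m mod 2) = 1 - int (m mod 2)" by presburger
  have V: "sg_val (star_edges n) (Suc (Suc m)) p f U =
     (if p then Max {g v s | v s. v \<in> U \<and> s \<in> {1, -1}} else Min {g v s | v s. v \<in> U \<and> s \<in> {1, -1}})"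
    unfolding g_def by (rule sg_val_Suc_eq)
  show ?case
  proof (cases p)
    case True
    have e: "A 1 = sgn (S - (1 - int (m mod 2)))" "A (-1) = sgn (- S - (1 - int (m mod 2)))"
      "B 1 = - sgn (\<bar>1 + S\<bar> - int (m mod 2))" "B (-1) = - sgn (\<bar>-1 + S\<bar> - int (m mod 2))"
      unfolding A_def B_def par using True by (simp_all add: algebra_simps)
    have M: "Max {A 1, A (-1), B 1, B (-1)} = sgn (\<bar>S\<bar> - (1 - int (m mod 2)))"
      unfolding e by (rule arith_max[OF r])
    have "sg_val (star_edges n) (Suc (Suc m)) p f U = Max {A 1, A (-1), B 1, B (-1)}"
      unfolding V O using True by simp
    then show ?thesis unfolding M S_def[symmetric] par using True by simp
  next
    case False
    have e: "A 1 = sgn (S + (1 - int (m mod 2)))" "A (-1) = sgn (- S + (1 - int (m mod 2)))"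
      "B 1 = sgn (\<bar>1 + S\<bar> - int (m mod 2))" "B (-1) = sgn (\<bar>-1 + S\<bar> - int (m mod 2))"
      unfolding A_def B_def par using False by (simp_all add: algebra_simps)
    have M: "Min {A 1, A (-1), B 1, B (-1)} = - sgn (\<bar>S\<bar> - (1 - int (m mod 2)))"
      unfolding e by (rule arith_min[OF r])
    have "sg_val (star_edges n) (Suc (Suc m)) p f U = Min {A 1, A (-1), B 1, B (-1)}"
      unfolding V O using False by simp
    then show ?thesis unfolding M S_def[symmetric] par using False by simp
  qed
qed

theorem theorem2:
  fixes n :: nat
  assumes "n \<ge> 1"
  shows "(even n \<longrightarrow>
            sign_game_outcome (star_vertices n) (star_edges n) True = 0 \<and>
            sign_game_outcome (star_vertices n) (star_edges n) False = 0)
       \<and> (odd n \<longrightarrow>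
            sign_game_outcome (star_vertices n) (star_edges n) True = -1 \<and>
            sign_game_outcome (star_vertices n) (star_edges n) False = 1)"
proof -
  have "sign_game_outcome (star_vertices n) (star_edges n) p =
     (if p then 1 else -1) * sgn (\<bar>\<Sum>i\<in>{1..n} - {0..n}. (\<lambda>_. 0::int) i\<bar> - int (n mod 2))" for p
  proof -
    have c: "card {0..n} = Suc n" by simp
    show ?thesis unfolding sign_game_outcome_def star_vertices_def c
      by (rule centre_free[of "{0..n}" n n]) auto
  qed
  then have "sign_game_outcome (star_vertices n) (star_edges n) p =
     (if p then 1 else -1) * sgn (- int (n mod 2))" for p by simp
  then show ?thesis by (auto simp: odd_iff_mod_2_eq_one)
qed

end
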